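(* Let $S,T$ be totally ordered sets and $M\colon S\times T\to\mathbf{Vec}$ pointwise finite-dimensional and middle exact. Let $s\in S$, $t\in T$, and let $J_S\subseteq S$, $J_T\subseteq T$ be intervals. (1) Suppose some element of $T\setminus J_T$ is an upper bound of $J_T$. Then every monomorphism $h\colon k_{\{s\}\times J_T}\hookrightarrow M|_{\{s\}\times T}$ (of modules over $\{s\}\times T$) extends to a monomorphism $k_{(-\infty,s]\times J_T}\hookrightarrow M|_{(-\infty,s]\times T}$ (of modules over $(-\infty,s]\times T$) whose restriction to $\{s\}\times T$ is $h$. (2) Suppose some element of $S\setminus J_S$ is an upper bound of $J_S$. Then every monomorphism $h\colon k_{J_S\times\{t\}}\hookrightarrow M|_{S\times\{t\}}$ extends to a monomorphism $k_{J_S\times(-\infty,t]}\hookrightarrow M|_{S\times(-\infty,t]}$ whose restriction to $S\times\{t\}$ is $h$.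
   Context: $S\times T$ has the product order. $(-\infty,s]=\{r\in S:r\le s\}$, similarly in $T$. $M$ is middle exact if for all $x\le x'$ in $S$, $y\le y'$ in $T$, with $a=(x,y)$, $b=(x,y')$, $c=(x',y)$, $d=(x',y')$, the sequence $M_a\xrightarrow{(M(a\le b),M(a\le c))}M_b\oplus M_c\xrightarrow{M(b\le d)-M(c\le d)}M_d$ is exact at the middle. Intervals in a totally ordered set are non-empty convex subsets. For a subset $B$ of a poset $Q$, $k_B$ is the module over $Q$ equal to $k$ on $B$, $0$ elsewhere, with identity maps between points of $B$ and zero maps otherwise; $M|_Q$ is the restriction of $M$ to $Q$. *)

theory Defs
  imports Main "HOL.Vector_Spaces" "HOL-Library.Product_Order"
begin

text \<open>All the vector spaces M_p are subspaces V p of one ambient k-vector space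
  (type 'v with scalar multiplication scale); F p q is the structure map M(p \<le> q),
  only its behaviour on V p matters.\<close>

definition lin_on :: "('k::field \<Rightarrow> 'v::ab_group_add \<Rightarrow> 'v) \<Rightarrow> ('k \<Rightarrow> 'w::ab_group_add \<Rightarrow> 'w)
    \<Rightarrow> 'v set \<Rightarrow> 'w set \<Rightarrow> ('v \<Rightarrow> 'w) \<Rightarrow> bool" where
  "lin_on sc1 sc2 A B f \<longleftrightarrow>
     (\<forall>x\<in>A. f x \<in> B) \<and>
     (\<forall>x\<in>A. \<forall>y\<in>A. f (x + y) = f x + f y) \<and>
     (\<forall>c. \<forall>x\<in>A. f (sc1 c x) = sc2 c (f x))"

definition pmodule :: "('k::field \<Rightarrow> 'v::ab_group_add \<Rightarrow> 'v) \<Rightarrow> ('p::order) set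
    \<Rightarrow> ('p \<Rightarrow> 'v set) \<Rightarrow> ('p \<Rightarrow> 'p \<Rightarrow> 'v \<Rightarrow> 'v) \<Rightarrow> bool" where
  "pmodule sc Q V F \<longleftrightarrow>
     vector_space sc \<and>
     (\<forall>p\<in>Q. module.subspace sc (V p)) \<and>
     (\<forall>p\<in>Q. \<forall>q\<in>Q. p \<le> q \<longrightarrow> lin_on sc sc (V p) (V q) (F p q)) \<and>
     (\<forall>p\<in>Q. \<forall>x\<in>V p. F p p x = x) \<and>
     (\<forall>p\<in>Q. \<forall>q\<in>Q. \<forall>r\<in>Q. p \<le> q \<longrightarrow> q \<le> r \<longrightarrow>
        (\<forall>x\<in>V p. F q r (F p q x) = F p r x))"

definition pfd :: "('k::field \<Rightarrow> 'v::ab_group_add \<Rightarrow> 'v) \<Rightarrow> 'p set \<Rightarrow> ('p \<Rightarrow> 'v set) \<Rightarrow> bool" where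
  "pfd sc Q V \<longleftrightarrow> (\<forall>p\<in>Q. \<exists>B. finite B \<and> B \<subseteq> V p \<and> module.span sc B = V p)"

definition pmorphism :: "('k::field \<Rightarrow> 'v::ab_group_add \<Rightarrow> 'v) \<Rightarrow> ('k \<Rightarrow> 'w::ab_group_add \<Rightarrow> 'w)
    \<Rightarrow> ('p::order) set \<Rightarrow> ('p \<Rightarrow> 'v set) \<Rightarrow> ('p \<Rightarrow> 'p \<Rightarrow> 'v \<Rightarrow> 'v)
    \<Rightarrow> ('p \<Rightarrow> 'w set) \<Rightarrow> ('p \<Rightarrow> 'p \<Rightarrow> 'w \<Rightarrow> 'w) \<Rightarrow> ('p \<Rightarrow> 'v \<Rightarrow> 'w) \<Rightarrow> bool" where
  "pmorphism sc1 sc2 Q V1 F1 V2 F2 \<phi> \<longleftrightarrow>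
     (\<forall>p\<in>Q. lin_on sc1 sc2 (V1 p) (V2 p) (\<phi> p)) \<and>
     (\<forall>p\<in>Q. \<forall>q\<in>Q. p \<le> q \<longrightarrow> (\<forall>x\<in>V1 p. \<phi> q (F1 p q x) = F2 p q (\<phi> p x)))"

definition pmono :: "('k::field \<Rightarrow> 'v::ab_group_add \<Rightarrow> 'v) \<Rightarrow> ('k \<Rightarrow> 'w::ab_group_add \<Rightarrow> 'w)
    \<Rightarrow> ('p::order) set \<Rightarrow> ('p \<Rightarrow> 'v set) \<Rightarrow> ('p \<Rightarrow> 'p \<Rightarrow> 'v \<Rightarrow> 'v)
    \<Rightarrow> ('p \<Rightarrow> 'w set) \<Rightarrow> ('p \<Rightarrow> 'p \<Rightarrow> 'w \<Rightarrow> 'w) \<Rightarrow> ('p \<Rightarrow> 'v \<Rightarrow> 'w) \<Rightarrow> bool" where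
  "pmono sc1 sc2 Q V1 F1 V2 F2 \<phi> \<longleftrightarrow>
     pmorphism sc1 sc2 Q V1 F1 V2 F2 \<phi> \<and> (\<forall>p\<in>Q. inj_on (\<phi> p) (V1 p))"

definition kB_sp :: "'p set \<Rightarrow> 'p \<Rightarrow> ('k::field) set" where
  "kB_sp B p = (if p \<in> B then UNIV else {0})"

definition kB_map :: "'p set \<Rightarrow> 'p \<Rightarrow> 'p \<Rightarrow> ('k::field) \<Rightarrow> 'k" where
  "kB_map B p q x = (if p \<in> B \<and> q \<in> B then x else 0)"

definition middle_exact :: "('k::field \<Rightarrow> 'v::ab_group_add \<Rightarrow> 'v)
    \<Rightarrow> (('a::linorder \<times> 'b::linorder) \<Rightarrow> 'v set) \<Rightarrow> ('a \<times> 'b \<Rightarrow> 'a \<times> 'b \<Rightarrow> 'v \<Rightarrow> 'v) \<Rightarrow> bool" where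
  "middle_exact sc V F \<longleftrightarrow>
     (\<forall>x x' y y'. x \<le> x' \<longrightarrow> y \<le> y' \<longrightarrow>
       (let a = (x, y); b = (x, y'); c = (x', y); d = (x', y') in
        \<forall>u\<in>V b. \<forall>w\<in>V c. F b d u - F c d w = 0 \<longrightarrow>
          (\<exists>m\<in>V a. F a b m = u \<and> F a c m = w)))"

definition interval :: "('a::linorder) set \<Rightarrow> bool" where
  "interval J \<longleftrightarrow> J \<noteq> {} \<and> (\<forall>x\<in>J. \<forall>z\<in>J. \<forall>y. x \<le> y \<longrightarrow> y \<le> z \<longrightarrow> y \<in> J)"

end

theory Submission
  imports Defs
begin


context vector_space
begin

definition coset :: "'b set \<Rightarrow> 'b set \<Rightarrow> bool" where
  "coset W0 A \<longleftrightarrow> (\<exists>a W. a \<in> W0 \<and> subspace W \<and> W \<subseteq> W0 \<and> A = (+) a ` W)"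

definition fdim :: "'b set \<Rightarrow> bool" where
  "fdim W0 \<longleftrightarrow> (\<exists>B. finite B \<and> B \<subseteq> W0 \<and> span B = W0)"

definition rk :: "'b set \<Rightarrow> nat" where
  "rk W = Max (card ` {J. J \<subseteq> W \<and> independent J})"

definition dirn :: "'b set \<Rightarrow> 'b set" where
  "dirn A = {x - y |x y. x \<in> A \<and> y \<in> A}"

lemma rk_facts:
  assumes "fdim W0" "W \<subseteq> W0"
  shows "\<And>J. J \<subseteq> W \<Longrightarrow> independent J \<Longrightarrow> finite J \<and> card J \<le> rk W"
    and "\<exists>J. J \<subseteq> W \<and> independent J \<and> finite J \<and> card J = rk W"
proof -
  obtain B where B: "finite B" "B \<subseteq> W0" "span B = W0" using assms(1) fdim_def by auto
  have bnd: "finite J \<and> card J \<le> card B" if "J \<subseteq> W" "independent J" for J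
    using independent_span_bound[OF B(1) that(2)] that(1) assms(2) B(3) by auto
  have fin: "finite (card ` {J. J \<subseteq> W \<and> independent J})"
    by (rule finite_subset[of _ "{..card B}"]) (use bnd in auto)
  have ne: "card ` {J. J \<subseteq> W \<and> independent J} \<noteq> {}" using independent_empty by blast
  show "\<And>J. J \<subseteq> W \<Longrightarrow> independent J \<Longrightarrow> finite J \<and> card J \<le> rk W"
    unfolding rk_def using fin bnd Max_ge by (metis (mono_tags, lifting) image_eqI mem_Collect_eq)
  have "rk W \<in> card ` {J. J \<subseteq> W \<and> independent J}"
    unfolding rk_def using Max_in[OF fin ne] .
  then show "\<exists>J. J \<subseteq> W \<and> independent J \<and> finite J \<and> card J = rk W"
    using bnd by auto
qed

lemma rk_eq:
  assumes "fdim W0" "subspace W" "subspace W'" "W \<subseteq> W'" "W' \<subseteq> W0" "rk W' \<le> rk W"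
  shows "W = W'"
proof (rule ccontr)
  assume "W \<noteq> W'"
  then obtain x where x: "x \<in> W'" "x \<notin> W" using assms(4) by auto
  obtain J where J: "J \<subseteq> W" "independent J" "finite J" "card J = rk W"
    using rk_facts(2)[OF assms(1) order_trans[OF assms(4,5)]] by blast
  have "span J \<subseteq> W" using span_minimal[OF J(1) assms(2)] .
  then have xs: "x \<notin> span J" using x by auto
  then have "x \<notin> J" using span_superset by auto
  have "independent (insert x J)" using independent_insertI[OF xs J(2)] .
  moreover have "insert x J \<subseteq> W'" using J(1) x assms(4) by auto
  ultimately have "card (insert x J) \<le> rk W'"
    using rk_facts(1)[OF assms(1) assms(5)] by blast
  also have "card (insert x J) = card J + 1" using \<open>x \<notin> J\<close> J(3) by simp
  finally show False using J(4) assms(6) by simp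
qed

lemma dirn_coset:
  assumes "subspace W" shows "dirn ((+) a ` W) = W"
proof
  show "dirn ((+) a ` W) \<subseteq> W"
    unfolding dirn_def using subspace_diff[OF assms] by auto
  show "W \<subseteq> dirn ((+) a ` W)"
  proof
    fix w assume "w \<in> W"
    then have "w = (a + w) - (a + 0)" "a + w \<in> (+) a ` W" "a + 0 \<in> (+) a ` W"
      using subspace_0[OF assms] by auto
    then show "w \<in> dirn ((+) a ` W)" unfolding dirn_def by blast
  qed
qed

lemma dirn_mono: "A \<subseteq> B \<Longrightarrow> dirn A \<subseteq> dirn B"
  unfolding dirn_def by blast

lemma recenter:
  assumes "subspace W" "c \<in> (+) a ` W" shows "(+) a ` W = (+) c ` W"
proof -
  obtain w0 where w0: "w0 \<in> W" "c = a + w0" using assms(2) by auto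
  show ?thesis
  proof
    show "(+) a ` W \<subseteq> (+) c ` W"
    proof
      fix x assume "x \<in> (+) a ` W"
      then obtain w where "w \<in> W" "x = a + w" by auto
      then have "x = c + (w - w0)" "w - w0 \<in> W" using w0 subspace_diff[OF assms(1)] by auto
      then show "x \<in> (+) c ` W" by blast
    qed
    show "(+) c ` W \<subseteq> (+) a ` W"
    proof
      fix x assume "x \<in> (+) c ` W"
      then obtain w where "w \<in> W" "x = c + w" by auto
      then have "x = a + (w0 + w)" "w0 + w \<in> W" using w0 subspace_add[OF assms(1)] by (auto simp: add.assoc)
      then show "x \<in> (+) a ` W" by blast
    qed
  qed
qed

lemma coset_subset: assumes "coset W0 A" "subspace W0" shows "A \<subseteq> W0"
proof
  fix x assume "x \<in> A"
  obtain a W where a: "a \<in> W0" "subspace W" "W \<subseteq> W0" "A = (+) a ` W"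
    using assms(1) coset_def by auto
  then obtain w where "w \<in> W" "x = a + w" using \<open>x \<in> A\<close> by auto
  then show "x \<in> W0" using subspace_add[OF assms(2) a(1)] a(3) by auto
qed

lemma coset_ne: assumes "coset W0 A" shows "A \<noteq> {}"
proof -
  obtain a W where a: "a \<in> W0" "subspace W" "W \<subseteq> W0" "A = (+) a ` W"
    using assms(1) coset_def by auto
  then show ?thesis using subspace_0[OF a(2)] by auto
qed

lemma DIR:
  assumes fd: "fdim W0" and ne: "\<A> \<noteq> {}" and co: "\<forall>A\<in>\<A>. coset W0 A"
    and dir: "\<forall>A\<in>\<A>. \<forall>B\<in>\<A>. \<exists>C\<in>\<A>. C \<subseteq> A \<and> C \<subseteq> B"
  shows "\<exists>A0\<in>\<A>. \<forall>A\<in>\<A>. A0 \<subseteq> A"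
proof -
  obtain A1 where "A1 \<in> \<A>" using ne by auto
  then obtain A0 where A0: "A0 \<in> \<A>" "\<forall>B. B \<in> \<A> \<longrightarrow> rk (dirn A0) \<le> rk (dirn B)"
    using ex_has_least_nat[of "\<lambda>A. A \<in> \<A>" A1 "\<lambda>A. rk (dirn A)"] by blast
  show ?thesis
  proof (intro bexI[OF _ A0(1)] ballI)
    fix A assume "A \<in> \<A>"
    then obtain C where C: "C \<in> \<A>" "C \<subseteq> A" "C \<subseteq> A0" using dir A0(1) by blast
    obtain c Wc where c: "c \<in> W0" "subspace Wc" "Wc \<subseteq> W0" "C = (+) c ` Wc"
      using co C(1) coset_def by auto
    obtain a W where a: "a \<in> W0" "subspace W" "W \<subseteq> W0" "A0 = (+) a ` W"
      using co A0(1) coset_def by auto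
    have "c \<in> C" using c subspace_0 by force
    then have "c \<in> (+) a ` W" using a(4) C(3) by auto
    then have A0c: "A0 = (+) c ` W" using recenter[OF a(2)] a(4) by simp
    have "Wc \<subseteq> W" using dirn_mono[OF C(3)] dirn_coset[OF c(2)] dirn_coset[OF a(2)] c(4) A0c by auto
    moreover have "rk W \<le> rk Wc" using A0(2) C(1) dirn_coset[OF c(2)] dirn_coset[OF a(2)] c(4) A0c
      by metis
    ultimately have "Wc = W" using rk_eq[OF fd c(2) a(2) _ a(3)] by auto
    then have "A0 = C" using A0c c(4) by simp
    then show "A0 \<subseteq> A" using C(2) by simp
  qed
qed

lemma lin_zero:
  assumes "lin_on scale scale V1 V2 f" "subspace V1" shows "f 0 = 0"
proof -
  have "f (0 + 0) = f 0 + f 0" using assms subspace_0 unfolding lin_on_def by blast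
  then show ?thesis by simp
qed

lemma coset_image:
  assumes lin: "lin_on scale scale V1 V2 f" and s1: "subspace V1" and co: "coset V1 A"
  shows "coset V2 (f ` A)"
proof -
  obtain a W where a: "a \<in> V1" "subspace W" "W \<subseteq> V1" "A = (+) a ` W"
    using co coset_def by auto
  have add: "\<And>x y. x \<in> V1 \<Longrightarrow> y \<in> V1 \<Longrightarrow> f (x + y) = f x + f y"
   and sc: "\<And>c x. x \<in> V1 \<Longrightarrow> f (c *s x) = c *s f x"
   and mem: "\<And>x. x \<in> V1 \<Longrightarrow> f x \<in> V2" using lin unfolding lin_on_def by auto
  have z: "f 0 = 0" using lin_zero[OF lin s1] .
  have "f ` A = (+) (f a) ` (f ` W)"
  proof -
    have "f ` A = (\<lambda>w. f (a + w)) ` W" using a(4) by (simp add: image_image)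
    also have "\<dots> = (\<lambda>w. f a + f w) ` W" using a(1,3) add by (intro image_cong) auto
    also have "\<dots> = (+) (f a) ` (f ` W)" by (simp add: image_image)
    finally show ?thesis .
  qed
  moreover have "subspace (f ` W)"
    unfolding subspace_def
  proof (intro conjI ballI allI)
    show "0 \<in> f ` W" using z subspace_0[OF a(2)] by force
    fix x y assume "x \<in> f ` W" "y \<in> f ` W"
    then obtain u v where "u \<in> W" "v \<in> W" "x = f u" "y = f v" by auto
    then show "x + y \<in> f ` W" using add[of u v] a(3) subspace_add[OF a(2)] by force
  next
    fix c x assume "x \<in> f ` W"
    then obtain u where "u \<in> W" "x = f u" by auto
    then have "c *s x = f (c *s u)" "c *s u \<in> W" using sc[of u c] a(3) subspace_scale[OF a(2)] by auto
    then show "c *s x \<in> f ` W" by blast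
  qed
  moreover have "f ` W \<subseteq> V2" using mem a(3) by auto
  ultimately show ?thesis unfolding coset_def using mem a(1) by blast
qed

lemma coset_preimage:
  assumes lin: "lin_on scale scale V1 V2 f" and s1: "subspace V1" and co: "coset V1 A"
    and a0: "a0 \<in> A" "f a0 = b"
  shows "coset V1 {y\<in>A. f y = b}"
proof -
  obtain a W where a: "a \<in> V1" "subspace W" "W \<subseteq> V1" "A = (+) a ` W"
    using co coset_def by auto
  have A: "A = (+) a0 ` W" using recenter[OF a(2)] a(4) a0(1) by auto
  have a0V: "a0 \<in> V1" using coset_subset[OF co s1] a0 by auto
  have add: "\<And>x y. x \<in> V1 \<Longrightarrow> y \<in> V1 \<Longrightarrow> f (x + y) = f x + f y"
   and sc: "\<And>c x. x \<in> V1 \<Longrightarrow> f (c *s x) = c *s f x" using lin unfolding lin_on_def by auto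
  have z: "f 0 = 0" using lin_zero[OF lin s1] .
  let ?K = "{w\<in>W. f w = 0}"
  have "{y\<in>A. f y = b} = (+) a0 ` ?K"
  proof
    show "{y\<in>A. f y = b} \<subseteq> (+) a0 ` ?K"
    proof
      fix y assume "y \<in> {y\<in>A. f y = b}"
      then obtain w where "w \<in> W" "y = a0 + w" "f y = b" using A by auto
      then have "f w = 0" using add[OF a0V, of w] a(3) a0(2) by auto
      then show "y \<in> (+) a0 ` ?K" using \<open>w \<in> W\<close> \<open>y = a0 + w\<close> by auto
    qed
    show "(+) a0 ` ?K \<subseteq> {y\<in>A. f y = b}"
      using A add[OF a0V] a(3) a0(2) by auto
  qed
  moreover have "subspace ?K"
    unfolding subspace_def
  proof (intro conjI ballI allI)
    show "0 \<in> ?K" using z subspace_0[OF a(2)] by force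
    fix x y assume "x \<in> ?K" "y \<in> ?K"
    then show "x + y \<in> ?K" using add[of x y] a(3) subspace_add[OF a(2)] by auto
  next
    fix c x assume "x \<in> ?K"
    then show "c *s x \<in> ?K" using sc[of x c] a(3) subspace_scale[OF a(2)] by auto
  qed
  ultimately show ?thesis unfolding coset_def using a0V a(3) by blast
qed

lemma coset_self: "subspace V1 \<Longrightarrow> coset V1 V1"
  unfolding coset_def by (rule exI[of _ 0]) (auto simp: subspace_0)

lemma GEN:
  fixes I Jz :: "'p::order set" and V :: "'p \<Rightarrow> 'b set" and F :: "'p \<Rightarrow> 'p \<Rightarrow> 'b \<Rightarrow> 'b"
    and C :: "'p \<Rightarrow> 'b set"
  assumes dirI: "\<forall>p\<in>I. \<forall>q\<in>I. \<exists>r\<in>I. r \<le> p \<and> r \<le> q"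
    and sub: "\<forall>p\<in>I. subspace (V p)" and fd: "\<forall>p\<in>I. fdim (V p)"
    and lin: "\<forall>p\<in>I. \<forall>q\<in>I. p \<le> q \<longrightarrow> lin_on scale scale (V p) (V q) (F p q)"
    and comp: "\<forall>p\<in>I. \<forall>q\<in>I. \<forall>r\<in>I. p \<le> q \<longrightarrow> q \<le> r \<longrightarrow> (\<forall>x\<in>V p. F q r (F p q x) = F p r x)"
    and Jz: "Jz \<subseteq> I" and cof: "\<forall>p\<in>I. \<exists>q\<in>Jz. q \<le> p"
    and dc: "\<forall>q\<in>Jz. \<forall>r\<in>I. r \<le> q \<longrightarrow> r \<in> Jz"
    and Cco: "\<forall>q\<in>Jz. coset (V q) (C q)"
    and Ccomp: "\<forall>q\<in>Jz. \<forall>r\<in>Jz. r \<le> q \<longrightarrow> F r q ` C r \<subseteq> C q"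
  defines "E \<equiv> \<lambda>p. \<Inter> ((\<lambda>q. F q p ` C q) ` {q\<in>Jz. q \<le> p})"
  shows "\<forall>p\<in>I. coset (V p) (E p) \<and> (\<forall>q\<in>I. p \<le> q \<longrightarrow> F p q ` E p \<subseteq> E q)"
proof (intro ballI conjI allI impI)
  fix p assume p: "p \<in> I"
  let ?A = "(\<lambda>q. F q p ` C q) ` {q\<in>Jz. q \<le> p}"
  have CV: "C q \<subseteq> V q" if "q \<in> Jz" for q
    using coset_subset[OF Cco[rule_format, OF that]] sub that Jz by auto
  have ne: "?A \<noteq> {}" using cof p by auto
  have co: "\<forall>X\<in>?A. coset (V p) X"
  proof
    fix X assume "X \<in> ?A"
    then obtain q where q: "q \<in> Jz" "q \<le> p" "X = F q p ` C q" by auto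
    show "coset (V p) X" using coset_image[of "V q" "V p" "F q p" "C q"] q lin p Jz sub Cco by auto
  qed
  have dir: "\<forall>X\<in>?A. \<forall>Y\<in>?A. \<exists>Z\<in>?A. Z \<subseteq> X \<and> Z \<subseteq> Y"
  proof (intro ballI)
    fix X Y assume "X \<in> ?A" "Y \<in> ?A"
    then obtain q1 q2 where q: "q1 \<in> Jz" "q1 \<le> p" "X = F q1 p ` C q1"
        "q2 \<in> Jz" "q2 \<le> p" "Y = F q2 p ` C q2" by auto
    obtain r where r: "r \<in> I" "r \<le> q1" "r \<le> q2" using dirI q(1,4) Jz by blast
    have rJz: "r \<in> Jz" using dc q(1) r by blast
    have sub1: "F r p ` C r \<subseteq> F qi p ` C qi" if "qi \<in> Jz" "qi \<le> p" "r \<le> qi" for qi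
    proof
      fix y assume "y \<in> F r p ` C r"
      then obtain z where z: "z \<in> C r" "y = F r p z" by auto
      have "F r qi z \<in> C qi" using Ccomp that rJz z(1) by blast
      moreover have "F qi p (F r qi z) = F r p z"
        using comp rJz that Jz p CV[OF rJz] z(1) by blast
      ultimately show "y \<in> F qi p ` C qi" using z(2) by (metis image_eqI)
    qed
    show "\<exists>Z\<in>?A. Z \<subseteq> X \<and> Z \<subseteq> Y"
      using sub1[OF q(1,2) r(2)] sub1[OF q(4,5) r(3)] q rJz r order_trans[OF r(2) q(2)] by blast
  qed
  obtain Z where Z: "Z \<in> ?A" "\<forall>X\<in>?A. Z \<subseteq> X" using DIR[OF _ ne co dir] fd p by blast
  have "E p = Z" unfolding E_def using Z by blast
  then show "coset (V p) (E p)" using co Z(1) by auto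
next
  fix p q assume p: "p \<in> I" and q: "q \<in> I" and pq: "p \<le> q"
  show "F p q ` E p \<subseteq> E q"
  proof
    fix y assume "y \<in> F p q ` E p"
    then obtain x where x: "x \<in> E p" "y = F p q x" by auto
    have "y \<in> F q' q ` C q'" if q': "q' \<in> Jz" "q' \<le> q" for q'
    proof -
      obtain r where r: "r \<in> I" "r \<le> p" "r \<le> q'" using dirI q'(1) p Jz by blast
      have rJz: "r \<in> Jz" using dc q'(1) r by blast
      have "x \<in> F r p ` C r" using x(1) rJz r unfolding E_def by blast
      then obtain z where z: "z \<in> C r" "x = F r p z" by auto
      have zV: "z \<in> V r" using coset_subset[OF Cco[rule_format, OF rJz]] sub r z by auto
      have "y = F r q z" using comp r p q pq zV x z by auto
      also have "\<dots> = F q' q (F r q' z)" using comp r q'(2) q zV Jz q'(1) by auto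
      finally have "y = F q' q (F r q' z)" .
      moreover have "F r q' z \<in> C q'" using Ccomp q'(1) rJz r(3) z(1) by blast
      ultimately show "y \<in> F q' q ` C q'" by blast
    qed
    then show "y \<in> E q" unfolding E_def by blast
  qed
qed

lemma ILL:
  fixes I :: "'p::order set" and V :: "'p \<Rightarrow> 'b set" and F :: "'p \<Rightarrow> 'p \<Rightarrow> 'b \<Rightarrow> 'b"
    and A :: "'p \<Rightarrow> 'b set"
  assumes dirI: "\<forall>p\<in>I. \<forall>q\<in>I. \<exists>r\<in>I. r \<le> p \<and> r \<le> q"
    and sub: "\<forall>p\<in>I. subspace (V p)" and fd: "\<forall>p\<in>I. fdim (V p)"
    and lin: "\<forall>p\<in>I. \<forall>q\<in>I. p \<le> q \<longrightarrow> lin_on scale scale (V p) (V q) (F p q)"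
    and idm: "\<forall>p\<in>I. \<forall>x\<in>V p. F p p x = x"
    and comp: "\<forall>p\<in>I. \<forall>q\<in>I. \<forall>r\<in>I. p \<le> q \<longrightarrow> q \<le> r \<longrightarrow> (\<forall>x\<in>V p. F q r (F p q x) = F p r x)"
    and Aco: "\<forall>p\<in>I. coset (V p) (A p)"
    and Acomp: "\<forall>p\<in>I. \<forall>q\<in>I. p \<le> q \<longrightarrow> F p q ` A p \<subseteq> A q"
  shows "\<exists>n. \<forall>p\<in>I. n p \<in> A p \<and> (\<forall>q\<in>I. p \<le> q \<longrightarrow> F p q (n p) = n q)"
proof -
  define sysP where "sysP Bs \<longleftrightarrow> (\<forall>p\<in>I. coset (V p) (Bs p) \<and> Bs p \<subseteq> A p \<and>
      (\<forall>q\<in>I. p \<le> q \<longrightarrow> F p q ` Bs p \<subseteq> Bs q))" for Bs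
  define enc :: "('p \<Rightarrow> 'b set) \<Rightarrow> ('p \<times> 'b) set" where "enc Bs = {(p,v). v \<notin> Bs p}" for Bs
  have dec: "Bs = (\<lambda>p. {v. (p,v) \<notin> enc Bs})" for Bs unfolding enc_def by auto
  have enc_le: "enc X \<subseteq> enc Y \<longleftrightarrow> (\<forall>p. Y p \<subseteq> X p)" for X Y unfolding enc_def by auto
  have sysA: "sysP A" unfolding sysP_def using Aco Acomp by auto
  let ?T = "enc ` {Bs. sysP Bs}"
  have "\<exists>M'\<in>?T. \<forall>X\<in>?T. M' \<subseteq> X \<longrightarrow> X = M'"
  proof (rule subset_Zorn)
    fix CC assume ch: "subset.chain ?T CC"
    show "\<exists>U\<in>?T. \<forall>X\<in>CC. X \<subseteq> U"
    proof (cases "CC = {}")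
      case True then show ?thesis using sysA by blast
    next
      case False
      define D where "D = {Bs. sysP Bs \<and> enc Bs \<in> CC}"
      have CCD: "CC = enc ` D" using ch unfolding D_def subset_chain_def by auto
      have Dne: "D \<noteq> {}" using False CCD by auto
      have Dsys: "\<And>Bs. Bs \<in> D \<Longrightarrow> sysP Bs" unfolding D_def by auto
      have Dch: "\<And>X Y. X \<in> D \<Longrightarrow> Y \<in> D \<Longrightarrow> (\<forall>p. X p \<subseteq> Y p) \<or> (\<forall>p. Y p \<subseteq> X p)"
      proof -
        fix X Y assume "X \<in> D" "Y \<in> D"
        then have "enc X \<in> CC" "enc Y \<in> CC" unfolding D_def by auto
        then have "enc X \<subseteq> enc Y \<or> enc Y \<subseteq> enc X" using ch unfolding subset_chain_def by auto
        then show "(\<forall>p. X p \<subseteq> Y p) \<or> (\<forall>p. Y p \<subseteq> X p)" using enc_le by blast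
      qed
      define Xm where "Xm p = \<Inter> ((\<lambda>Bs. Bs p) ` D)" for p
      have "sysP Xm" unfolding sysP_def
      proof (intro ballI conjI allI impI)
        fix p assume p: "p \<in> I"
        let ?A = "(\<lambda>Bs. Bs p) ` D"
        have co: "\<forall>X\<in>?A. coset (V p) X" using Dsys p unfolding sysP_def by auto
        have dir: "\<forall>X\<in>?A. \<forall>Y\<in>?A. \<exists>Z\<in>?A. Z \<subseteq> X \<and> Z \<subseteq> Y"
        proof (intro ballI)
          fix X Y assume "X \<in> ?A" "Y \<in> ?A"
          then obtain B1 B2 where "B1 \<in> D" "B2 \<in> D" "X = B1 p" "Y = B2 p" by auto
          then show "\<exists>Z\<in>?A. Z \<subseteq> X \<and> Z \<subseteq> Y" using Dch[of B1 B2] by blast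
        qed
        obtain Z where Z: "Z \<in> ?A" "\<forall>X\<in>?A. Z \<subseteq> X" using DIR[OF _ _ co dir] fd p Dne by blast
        have XZ: "Xm p = Z" unfolding Xm_def using Z by blast
        then show "coset (V p) (Xm p)" using co Z(1) by auto
        obtain B where "B \<in> D" "Z = B p" using Z(1) by auto
        then show "Xm p \<subseteq> A p" using XZ Dsys p unfolding sysP_def by auto
      next
        fix p q assume p: "p \<in> I" and q: "q \<in> I" and pq: "p \<le> q"
        have "F p q ` Xm p \<subseteq> B q" if "B \<in> D" for B
        proof -
          have "Xm p \<subseteq> B p" using that unfolding Xm_def by auto
          then have "F p q ` Xm p \<subseteq> F p q ` B p" by auto
          also have "\<dots> \<subseteq> B q" using Dsys[OF that] p q pq unfolding sysP_def by auto
          finally show ?thesis .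
        qed
        then show "F p q ` Xm p \<subseteq> Xm q" unfolding Xm_def by auto
      qed
      moreover have "\<forall>X\<in>CC. X \<subseteq> enc Xm"
      proof
        fix X assume "X \<in> CC"
        then obtain B where "B \<in> D" "X = enc B" using CCD by auto
        then show "X \<subseteq> enc Xm" using enc_le[of B Xm] unfolding Xm_def by auto
      qed
      ultimately show ?thesis by blast
    qed
  qed
  then obtain M where sysM: "sysP M" and minM0: "\<forall>X. sysP X \<longrightarrow> enc M \<subseteq> enc X \<longrightarrow> enc X = enc M"
    by blast
  have minM: "X = M" if "sysP X" "\<forall>p. X p \<subseteq> M p" for X
  proof -
    have "enc X = enc M" using minM0 that enc_le by blast
    then show ?thesis using dec[of X] dec[of M] by simp
  qed
  have MV: "M p \<subseteq> V p" if "p \<in> I" for p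
    using sysM that coset_subset sub unfolding sysP_def by blast
  have surj: "M p \<subseteq> F q p ` M q" if "p \<in> I" "q \<in> I" "q \<le> p" for p q
  proof -
    define E where "E = (\<lambda>p. \<Inter> ((\<lambda>q. F q p ` M q) ` {q\<in>I. q \<le> p}))"
    have G: "\<forall>p\<in>I. coset (V p) (E p) \<and> (\<forall>q\<in>I. p \<le> q \<longrightarrow> F p q ` E p \<subseteq> E q)"
      unfolding E_def
      by (rule GEN[OF dirI sub fd lin comp, where Jz=I and C=M]) (use sysM in \<open>auto simp: sysP_def\<close>)
    define E' where "E' p = (if p \<in> I then E p else M p)" for p
    have EM: "E p \<subseteq> M p" if "p \<in> I" for p
    proof -
      have "E p \<subseteq> F p p ` M p" unfolding E_def using that by blast
      also have "\<dots> = M p" using idm that MV[OF that] by (force simp: image_iff)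
      finally show ?thesis .
    qed
    have "sysP E'" unfolding sysP_def
    proof (intro ballI conjI allI impI)
      fix p assume p: "p \<in> I"
      show "coset (V p) (E' p)" using G p by (simp add: E'_def)
      have "M p \<subseteq> A p" using sysM p unfolding sysP_def by blast
      then show "E' p \<subseteq> A p" using EM[OF p] p by (simp add: E'_def)
      fix q assume "q \<in> I" "p \<le> q"
      then show "F p q ` E' p \<subseteq> E' q" using G p by (simp add: E'_def)
    qed
    moreover have "\<forall>p. E' p \<subseteq> M p" unfolding E'_def using EM by auto
    ultimately have "E' = M" using minM by blast
    then have "M p = E' p" by simp
    then have "M p = E p" using that unfolding E'_def by simp
    also have "\<dots> \<subseteq> F q p ` M q" unfolding E_def using that by blast
    finally show ?thesis .
  qed
  have single: "M p0 = {b}" if p0: "p0 \<in> I" and b: "b \<in> M p0" for p0 b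
  proof -
    define I0 where "I0 = {q\<in>I. q \<le> p0}"
    define C where "C q = {y\<in>M q. F q p0 y = b}" for q
    have Cco: "\<forall>q\<in>I0. coset (V q) (C q)"
    proof
      fix q assume q: "q \<in> I0"
      then have qI: "q \<in> I" "q \<le> p0" unfolding I0_def by auto
      obtain y where y: "y \<in> M q" "F q p0 y = b" using surj[OF p0 qI] b by auto
      have l: "lin_on scale scale (V q) (V p0) (F q p0)" using lin qI p0 by blast
      have s: "subspace (V q)" using sub qI by blast
      have c: "coset (V q) (M q)" using sysM qI unfolding sysP_def by blast
      show "coset (V q) (C q)" unfolding C_def
        using coset_preimage[OF l s c y] .
    qed
    have h1: "I0 \<subseteq> I" unfolding I0_def by auto
    have h2: "\<forall>p\<in>I. \<exists>q\<in>I0. q \<le> p"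
    proof
      fix p assume "p \<in> I"
      then obtain r where "r \<in> I" "r \<le> p" "r \<le> p0" using dirI[rule_format, OF _ p0] by blast
      then show "\<exists>q\<in>I0. q \<le> p" unfolding I0_def by auto
    qed
    have h3: "\<forall>q\<in>I0. \<forall>r\<in>I. r \<le> q \<longrightarrow> r \<in> I0" unfolding I0_def by auto
    have h5: "\<forall>q\<in>I0. \<forall>r\<in>I0. r \<le> q \<longrightarrow> F r q ` C r \<subseteq> C q"
      proof (intro ballI impI subsetI)
        fix q r y assume q: "q \<in> I0" and r: "r \<in> I0" and rq: "r \<le> q" and y: "y \<in> F r q ` C r"
        then obtain z where z: "z \<in> M r" "F r p0 z = b" "y = F r q z" unfolding C_def by auto
        have qI: "q \<in> I" "q \<le> p0" "r \<in> I" using q r unfolding I0_def by auto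
        have "y \<in> M q" using sysM qI rq z unfolding sysP_def by blast
        moreover have "F q p0 (F r q z) = F r p0 z" using comp qI p0 rq z(1) MV[OF qI(3)] by blast
        then have "F q p0 y = b" using z by simp
        ultimately show "y \<in> C q" unfolding C_def by auto
      qed
    note GG = GEN[OF dirI sub fd lin comp h1 h2 h3 Cco h5]
    define E where "E p = \<Inter> ((\<lambda>q. F q p ` C q) ` {q\<in>I0. q \<le> p})" for p
    note G = GG[folded E_def]
    define E' where "E' p = (if p \<in> I then E p else M p)" for p
    have EM: "E p \<subseteq> M p" if pI: "p \<in> I" for p
    proof -
      obtain q where q0: "q \<in> I" "q \<le> p" "q \<le> p0" using dirI[rule_format, OF pI p0] by blast
      then have q: "q \<in> I0" "q \<le> p" unfolding I0_def by auto
      have "E p \<subseteq> F q p ` C q" unfolding E_def by (rule Inter_lower) (use q in auto)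
      also have "\<dots> \<subseteq> F q p ` M q" unfolding C_def by (rule image_mono) auto
      also have "\<dots> \<subseteq> M p"
      proof -
        have "\<forall>q'\<in>I. q \<le> q' \<longrightarrow> F q q' ` M q \<subseteq> M q'" using sysM q0(1) unfolding sysP_def by blast
        then show ?thesis using pI q0(2) by blast
      qed
      finally show ?thesis .
    qed
    have "sysP E'" unfolding sysP_def
    proof (intro ballI conjI allI impI)
      fix p assume p: "p \<in> I"
      show "coset (V p) (E' p)" using G p by (simp add: E'_def)
      have "M p \<subseteq> A p" using sysM p unfolding sysP_def by blast
      then show "E' p \<subseteq> A p" using EM[OF p] p by (simp add: E'_def)
      fix q assume "q \<in> I" "p \<le> q"
      then show "F p q ` E' p \<subseteq> E' q" using G p by (simp add: E'_def)
    qed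
    moreover have "\<forall>p. E' p \<subseteq> M p" unfolding E'_def using EM by auto
    ultimately have "E' = M" using minM by blast
    then have "M p0 = E' p0" by simp
    then have "M p0 = E p0" using p0 unfolding E'_def by simp
    also have "\<dots> \<subseteq> F p0 p0 ` C p0" unfolding E_def
    proof (rule Inter_lower)
      show "F p0 p0 ` C p0 \<in> (\<lambda>q. F q p0 ` C q) ` {q \<in> I0. q \<le> p0}" using p0 unfolding I0_def by auto
    qed
    also have "\<dots> \<subseteq> {b}"
    proof
      fix y assume "y \<in> F p0 p0 ` C p0"
      then obtain z where z: "z \<in> M p0" "F p0 p0 z = b" "y = F p0 p0 z" unfolding C_def by auto
      then show "y \<in> {b}" by simp
    qed
    finally show ?thesis using b by auto
  qed
  define n where "n p = (SOME v. v \<in> M p)" for p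
  have nM: "n p \<in> M p" if "p \<in> I" for p
    using sysM that coset_ne unfolding sysP_def n_def by (meson ex_in_conv someI)
  show ?thesis
  proof (intro exI ballI conjI allI impI)
    fix p assume p: "p \<in> I"
    show "n p \<in> A p" using nM[OF p] sysM p unfolding sysP_def by auto
    fix q assume q: "q \<in> I" and pq: "p \<le> q"
    have "F p q (n p) \<in> M q" using nM[OF p] sysM p q pq unfolding sysP_def by blast
    then show "F p q (n p) = n q" using single[OF q nM[OF q]] by auto
  qed
qed

end



lemma part1:
  fixes sc :: "'k::field \<Rightarrow> 'v::ab_group_add \<Rightarrow> 'v"
    and V :: "('a::linorder \<times> 'b::linorder) \<Rightarrow> 'v set"
    and F :: "'a \<times> 'b \<Rightarrow> 'a \<times> 'b \<Rightarrow> 'v \<Rightarrow> 'v"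
    and s :: 'a and JT :: "'b set"
  assumes M: "pmodule sc UNIV V F"
    and pfd: "pfd sc UNIV V"
    and mex: "middle_exact sc V F"
    and JT: "interval JT"
    and uex: "\<exists>u. u \<notin> JT \<and> (\<forall>j\<in>JT. j \<le> u)"
    and h: "pmono (*) sc ({s} \<times> UNIV) (kB_sp ({s} \<times> JT)) (kB_map ({s} \<times> JT)) V F h"
  shows "\<exists>g. pmono (*) sc ({..s} \<times> UNIV) (kB_sp ({..s} \<times> JT)) (kB_map ({..s} \<times> JT)) V F g \<and>
             (\<forall>p\<in>{s} \<times> UNIV. \<forall>x\<in>kB_sp ({s} \<times> JT) p. g p x = h p x)"
proof -
  note Mu = M[unfolded pmodule_def]
  interpret vs: vector_space sc using conjunct1[OF Mu] .
  have subA: "\<forall>p. vs.subspace (V p)" using conjunct1[OF conjunct2[OF Mu]] by simp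
  have linA: "\<forall>p q. p \<le> q \<longrightarrow> lin_on sc sc (V p) (V q) (F p q)"
    using conjunct1[OF conjunct2[OF conjunct2[OF Mu]]] by simp
  have idmA: "\<forall>p. \<forall>x\<in>V p. F p p x = x"
    using conjunct1[OF conjunct2[OF conjunct2[OF conjunct2[OF Mu]]]] by simp
  have compA: "\<forall>p q r. p \<le> q \<longrightarrow> q \<le> r \<longrightarrow> (\<forall>x\<in>V p. F q r (F p q x) = F p r x)"
    using conjunct2[OF conjunct2[OF conjunct2[OF conjunct2[OF Mu]]]] by simp
  have sub: "\<And>p. vs.subspace (V p)" using subA by blast
  have lin: "\<And>p q. p \<le> q \<Longrightarrow> lin_on sc sc (V p) (V q) (F p q)" using linA by blast
  have idm: "\<And>p x. x \<in> V p \<Longrightarrow> F p p x = x" using idmA by blast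
  have comp: "\<And>p q r x. p \<le> q \<Longrightarrow> q \<le> r \<Longrightarrow> x \<in> V p \<Longrightarrow> F q r (F p q x) = F p r x"
    using compA by blast
  have fdA: "\<forall>p. \<exists>B. finite B \<and> B \<subseteq> V p \<and> vs.span B = V p" using pfd unfolding pfd_def by simp
  have fd: "\<And>p. vs.fdim (V p)" unfolding vs.fdim_def by (rule spec[OF fdA])
  have linm: "F p q x \<in> V q" "F p q (x + y) = F p q x + F p q y" "F p q (sc c x) = sc c (F p q x)"
    if "p \<le> q" "x \<in> V p" "y \<in> V p" for p q x y c
    using lin[OF that(1)] that(2,3) unfolding lin_on_def by auto
  have F0: "F p q 0 = 0" if "p \<le> q" for p q
    using vs.lin_zero[OF lin[OF that] sub] .
  define m where "m j = h (s, j) 1" for j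
  have hlin: "lin_on (*) sc (kB_sp ({s} \<times> JT) p) (V p) (h p)" if "p \<in> {s} \<times> UNIV" for p
    using h that unfolding pmono_def pmorphism_def by blast
  have hnat: "h q (kB_map ({s} \<times> JT) p q x) = F p q (h p x)"
    if "p \<in> {s} \<times> UNIV" "q \<in> {s} \<times> UNIV" "p \<le> q" "x \<in> kB_sp ({s} \<times> JT) p" for p q x
    using h that unfolding pmono_def pmorphism_def by blast
  have hinj: "inj_on (h p) (kB_sp ({s} \<times> JT) p)" if "p \<in> {s} \<times> UNIV" for p
    using h that unfolding pmono_def by blast
  have h0: "h p 0 = 0" if "p \<in> {s} \<times> UNIV" for p
  proof -
    have "0 \<in> kB_sp ({s} \<times> JT) p" unfolding kB_sp_def by auto
    then have "h p (0 + 0) = h p 0 + h p 0" using hlin[OF that] unfolding lin_on_def by blast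
    then show ?thesis by simp
  qed
  have mV: "m j \<in> V (s, j)" if "j \<in> JT" for j
    using hlin[of "(s,j)"] that unfolding lin_on_def kB_sp_def m_def by auto
  have m0: "m j \<noteq> 0" if "j \<in> JT" for j
  proof
    assume "m j = 0"
    then have "h (s,j) 1 = h (s,j) 0" using h0[of "(s,j)"] unfolding m_def by auto
    moreover have "(1::'k) \<in> kB_sp ({s} \<times> JT) (s,j)" "(0::'k) \<in> kB_sp ({s} \<times> JT) (s,j)"
      using that unfolding kB_sp_def by auto
    ultimately show False using hinj[of "(s,j)"] unfolding inj_on_def by fastforce
  qed
  have mnat: "F (s,j) (s,j') (m j) = m j'" if "j \<in> JT" "j' \<in> JT" "j \<le> j'" for j j'
    using hnat[of "(s,j)" "(s,j')" 1] that unfolding m_def kB_map_def kB_sp_def by auto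
  have mkill: "F (s,j) (s,j') (m j) = 0" if "j \<in> JT" "j' \<notin> JT" "j \<le> j'" for j j'
    using hnat[of "(s,j)" "(s,j')" 1] h0[of "(s,j')"] that unfolding m_def kB_map_def kB_sp_def by auto
  define K where "K = {k. k \<notin> JT \<and> (\<exists>j\<in>JT. j \<le> k)}"
  have Kab: "j \<le> k" if kK: "k \<in> K" and jJ: "j \<in> JT" for k j
  proof (rule ccontr)
    assume "\<not> j \<le> k"
    then have "k \<le> j" by auto
    obtain j1 where "j1 \<in> JT" "j1 \<le> k" "k \<notin> JT" using kK unfolding K_def by auto
    then show False using JT \<open>k \<le> j\<close> jJ unfolding interval_def by blast
  qed
  obtain u where u: "u \<notin> JT" "\<forall>j\<in>JT. j \<le> u" using uex by blast
  have JTne: "JT \<noteq> {}" using JT unfolding interval_def by auto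
  have uK: "u \<in> K" using u JTne unfolding K_def by auto
  define I where "I = {..s} \<times> JT"
  define A where "A p = {n \<in> V p. F p (s, snd p) n = m (snd p) \<and> (\<forall>k\<in>K. F p (fst p, k) n = 0)}" for p
  have Aco: "vs.coset (V p) (A p)" if pI: "p \<in> I" for p
  proof -
    obtain x j where p: "p = (x, j)" "x \<le> s" "j \<in> JT" using pI unfolding I_def by auto
    define ker where "ker k = {n \<in> V p. F p (x, k) n = 0}" for k
    have pk: "p \<le> (x,k)" if "k \<in> K" for k using Kab[OF that p(3)] p by simp
    let ?K = "ker ` K"
    have co: "\<forall>X\<in>?K. vs.coset (V p) X"
    proof
      fix X assume "X \<in> ?K"
      then obtain k where k: "k \<in> K" "X = ker k" by auto
      have "vs.coset (V p) {n \<in> V p. F p (x, k) n = 0}"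
        using vs.coset_preimage[OF lin[OF pk[OF k(1)]] sub vs.coset_self[OF sub], of 0 0]
          sub vs.subspace_0 F0[OF pk[OF k(1)]] by blast
      then show "vs.coset (V p) X" using k unfolding ker_def by simp
    qed
    have dir: "\<forall>X\<in>?K. \<forall>Y\<in>?K. \<exists>Z\<in>?K. Z \<subseteq> X \<and> Z \<subseteq> Y"
    proof (intro ballI)
      fix X Y assume "X \<in> ?K" "Y \<in> ?K"
      then obtain k1 k2 where k: "k1 \<in> K" "k2 \<in> K" "X = ker k1" "Y = ker k2" by auto
      have mono: "ker a \<subseteq> ker b" if "a \<in> K" "b \<in> K" "a \<le> b" for a b
      proof
        fix n assume "n \<in> ker a"
        then have n: "n \<in> V p" "F p (x, a) n = 0" unfolding ker_def by auto
        have "F p (x, b) n = F (x,a) (x,b) (F p (x,a) n)" using comp[OF pk[OF that(1)] _ n(1), of "(x,b)"] that(3) by simp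
        also have "\<dots> = 0" using n(2) F0[of "(x,a)" "(x,b)"] that(3) by simp
        finally show "n \<in> ker b" using n(1) unfolding ker_def by simp
      qed
      show "\<exists>Z\<in>?K. Z \<subseteq> X \<and> Z \<subseteq> Y"
      proof (cases "k1 \<le> k2")
        case True then show ?thesis using mono[OF k(1,2)] k by blast
      next
        case False then have "k2 \<le> k1" by auto
        then show ?thesis using mono[OF k(2,1)] k by blast
      qed
    qed
    obtain Z where Z: "Z \<in> ?K" "\<forall>X\<in>?K. Z \<subseteq> X" using vs.DIR[OF fd _ co dir] uK by blast
    obtain k0 where k0: "k0 \<in> K" "Z = ker k0" using Z(1) by auto
    have Aeq: "A p = {y \<in> ker k0. F p (s, j) y = m j}"
    proof
      show "A p \<subseteq> {y \<in> ker k0. F p (s, j) y = m j}"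
        unfolding A_def ker_def using p k0 by auto
      show "{y \<in> ker k0. F p (s, j) y = m j} \<subseteq> A p"
      proof
        fix y assume y: "y \<in> {y \<in> ker k0. F p (s, j) y = m j}"
        have "y \<in> ker k" if "k \<in> K" for k using Z(2) k0 y that by blast
        then show "y \<in> A p" using y p unfolding A_def ker_def by auto
      qed
    qed
    have jk0: "j \<le> k0" using Kab[OF k0(1) p(3)] .
    have k0J: "k0 \<notin> JT" using k0(1) unfolding K_def by auto
    have eq: "F (x, k0) (s, k0) 0 - F (s, j) (s, k0) (m j) = 0"
      using F0[of "(x,k0)" "(s,k0)"] mkill[OF p(3) k0J jk0] p(2) by simp
    obtain n0 where n0: "n0 \<in> V (x,j)" "F (x, j) (x, k0) n0 = 0" "F (x, j) (s, j) n0 = m j"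
      using mex[unfolded middle_exact_def Let_def, rule_format, OF p(2) jk0 vs.subspace_0[OF sub] mV[OF p(3)] eq]
      by blast
    have "vs.coset (V p) (ker k0)" using co k0 by blast
    moreover have "n0 \<in> ker k0" using n0 p unfolding ker_def by simp
    moreover have ps: "p \<le> (s, j)" using p by simp
    ultimately show ?thesis unfolding Aeq
      using vs.coset_preimage[OF lin[OF ps] sub] n0 p by simp
  qed
  have Acomp: "F q p ` A q \<subseteq> A p" if qI: "q \<in> I" and pI: "p \<in> I" and qp0: "q \<le> p" for p q
  proof
    fix y assume "y \<in> F q p ` A q"
    then obtain n where n: "n \<in> A q" "y = F q p n" by auto
    obtain x j where p: "p = (x, j)" "x \<le> s" "j \<in> JT" using pI unfolding I_def by auto
    obtain x' j' where q: "q = (x', j')" "x' \<le> s" "j' \<in> JT" using qI unfolding I_def by auto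
    have qp: "x' \<le> x" "j' \<le> j" using qp0 p q by auto
    have nV: "n \<in> V q" and nm: "F q (s, j') n = m j'" and nk: "\<And>k. k \<in> K \<Longrightarrow> F q (x', k) n = 0"
      using n(1) q unfolding A_def by auto
    have yV: "y \<in> V p" using linm(1)[OF qp0 nV nV] n(2) by simp
    have "F p (s, j) y = F q (s, j) n" using comp[OF qp0 _ nV, of "(s,j)"] p n(2) by simp
    also have "\<dots> = F (s, j') (s, j) (F q (s, j') n)" using comp[of q "(s,j')" "(s,j)" n] q qp p nV by simp
    also have "\<dots> = m j" using nm mnat[OF q(3) p(3) qp(2)] by simp
    finally have ym: "F p (s, j) y = m j" .
    have yk: "F p (x, k) y = 0" if "k \<in> K" for k
    proof -
      have jk: "j \<le> k" "j' \<le> k" using Kab[OF that p(3)] Kab[OF that q(3)] by auto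
      have "F p (x, k) y = F q (x, k) n" using comp[OF qp0 _ nV, of "(x,k)"] p jk n(2) by simp
      also have "\<dots> = F (x', k) (x, k) (F q (x', k) n)" using comp[of q "(x',k)" "(x,k)" n] q qp jk nV by simp
      also have "\<dots> = 0" using nk[OF that] F0[of "(x',k)" "(x,k)"] qp by simp
      finally show ?thesis .
    qed
    show "y \<in> A p" unfolding A_def using yV ym yk p by simp
  qed
  have dirI: "\<forall>p\<in>I. \<forall>q\<in>I. \<exists>r\<in>I. r \<le> p \<and> r \<le> q"
  proof (intro ballI)
    fix p q assume "p \<in> I" "q \<in> I"
    then have "(min (fst p) (fst q), min (snd p) (snd q)) \<in> I"
      unfolding I_def by (auto simp: min_def)
    moreover have "(min (fst p) (fst q), min (snd p) (snd q)) \<le> p"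
      "(min (fst p) (fst q), min (snd p) (snd q)) \<le> q" by (auto simp: less_eq_prod_def)
    ultimately show "\<exists>r\<in>I. r \<le> p \<and> r \<le> q" by blast
  qed
  obtain n where n: "\<forall>p\<in>I. n p \<in> A p \<and> (\<forall>q\<in>I. p \<le> q \<longrightarrow> F p q (n p) = n q)"
  proof -
    have a1: "\<forall>p\<in>I. vs.subspace (V p)" using sub by blast
    have a2: "\<forall>p\<in>I. vs.fdim (V p)" using fd by blast
    have a3: "\<forall>p\<in>I. \<forall>q\<in>I. p \<le> q \<longrightarrow> lin_on sc sc (V p) (V q) (F p q)" using lin by blast
    have a4: "\<forall>p\<in>I. \<forall>x\<in>V p. F p p x = x" using idm by blast
    have a5: "\<forall>p\<in>I. \<forall>q\<in>I. \<forall>r\<in>I. p \<le> q \<longrightarrow> q \<le> r \<longrightarrow> (\<forall>x\<in>V p. F q r (F p q x) = F p r x)"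
      using comp by blast
    have a6: "\<forall>p\<in>I. vs.coset (V p) (A p)" using Aco by blast
    have a7: "\<forall>p\<in>I. \<forall>q\<in>I. p \<le> q \<longrightarrow> F p q ` A p \<subseteq> A q" using Acomp by blast
    show ?thesis using vs.ILL[OF dirI a1 a2 a3 a4 a5 a6 a7] that by blast
  qed
  have nV: "n p \<in> V p" if "p \<in> I" for p using n that unfolding A_def by blast
  have nm: "F p (s, snd p) (n p) = m (snd p)" if "p \<in> I" for p using n that unfolding A_def by blast
  have nk: "F p (fst p, k) (n p) = 0" if "p \<in> I" "k \<in> K" for p k using n that unfolding A_def by blast
  have nn: "F p q (n p) = n q" if "p \<in> I" "q \<in> I" "p \<le> q" for p q using n that by blast
  have n0: "n p \<noteq> 0" if "p \<in> I" for p
  proof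
    assume "n p = 0"
    then have "m (snd p) = 0" using nm[OF that] F0[of p "(s, snd p)"] that unfolding I_def by auto
    then show False using m0 that unfolding I_def by auto
  qed
  define g where "g p c = (if p \<in> I then sc c (n p) else 0)" for p c
  have glin: "lin_on (*) sc (kB_sp I p) (V p) (g p)" for p
  proof (cases "p \<in> I")
    case True
    then show ?thesis unfolding lin_on_def g_def
      using vs.subspace_scale[OF sub nV[OF True]] by (simp add: vs.scale_left_distrib)
  next
    case False
    then show ?thesis unfolding lin_on_def g_def using vs.subspace_0[OF sub] by simp
  qed
  have gnat: "g q (kB_map I p q x) = F p q (g p x)" if pq: "p \<le> q" and qQ: "q \<in> {..s} \<times> UNIV" and xk: "x \<in> kB_sp I p" for p q x
  proof (cases "p \<in> I")
    case pI: True
    show ?thesis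
    proof (cases "q \<in> I")
      case True
      then show ?thesis using pI nn[OF pI True pq] linm(3)[OF pq nV[OF pI] nV[OF pI]]
        unfolding g_def kB_map_def by simp
    next
      case False
      obtain x1 j where p: "p = (x1, j)" "j \<in> JT" using pI unfolding I_def by auto
      obtain x' k where q: "q = (x', k)" "x' \<le> s" using qQ by auto
      have kJ: "k \<notin> JT" using False q unfolding I_def by auto
      have jk: "j \<le> k" "x1 \<le> x'" using pq p q by auto
      have kK: "k \<in> K" using kJ jk p unfolding K_def by auto
      have "F p q (n p) = F (x1, k) q (F p (x1, k) (n p))" using comp[of p "(x1,k)" q "n p"] p q jk nV[OF pI] by simp
      also have "\<dots> = 0" using nk[OF pI kK] p F0[of "(x1,k)" q] q jk by simp
      finally have "F p q (n p) = 0" .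
      then show ?thesis using pI False linm(3)[OF pq nV[OF pI] nV[OF pI]]
        unfolding g_def kB_map_def by simp
    qed
  next
    case False
    then have "x = 0" using xk unfolding kB_sp_def by auto
    then show ?thesis using False F0[OF pq] unfolding g_def kB_map_def by simp
  qed
  have ginj: "inj_on (g p) (kB_sp I p)" for p
  proof (cases "p \<in> I")
    case True
    show ?thesis
    proof (rule inj_onI)
      fix c d assume "g p c = g p d"
      then have "sc c (n p) = sc d (n p)" using True unfolding g_def by simp
      then have "sc (c - d) (n p) = 0" by (simp add: vs.scale_left_diff_distrib)
      then show "c = d" using n0[OF True] by simp
    qed
  next
    case False
    then show ?thesis unfolding kB_sp_def inj_on_def by auto
  qed
  have "pmono (*) sc ({..s} \<times> UNIV) (kB_sp I) (kB_map I) V F g"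
    unfolding pmono_def pmorphism_def using glin gnat ginj by blast
  moreover have "\<forall>p\<in>{s} \<times> UNIV. \<forall>x\<in>kB_sp ({s} \<times> JT) p. g p x = h p x"
  proof (intro ballI)
    fix p and x :: 'k assume p: "p \<in> {s} \<times> UNIV" and x: "x \<in> kB_sp ({s} \<times> JT) p"
    obtain j where pj: "p = (s, j)" using p by auto
    show "g p x = h p x"
    proof (cases "j \<in> JT")
      case True
      then have pI: "p \<in> I" using pj unfolding I_def by auto
      have "n p = m j" using nm[OF pI] idm[OF nV[OF pI]] pj by simp
      moreover have hs: "\<forall>c y. h p (c * y) = sc c (h p y)"
        using hlin[OF p] True pj unfolding lin_on_def kB_sp_def by auto
      have "h p x = sc x (h p 1)" using hs[rule_format, of x 1] by simp
      ultimately show ?thesis using pI \<open>h p x = sc x (h p 1)\<close> unfolding g_def m_def pj by simp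
    next
      case False
      then have "x = 0" "p \<notin> I" using x pj unfolding kB_sp_def I_def by auto
      then show ?thesis using h0[OF p] unfolding g_def by simp
    qed
  qed
  ultimately show ?thesis unfolding I_def by blast
qed


lemma swap_le: "prod.swap p \<le> prod.swap q \<longleftrightarrow> (p::'a::order \<times> 'b::order) \<le> q"
  by (cases p, cases q) (auto simp add: less_eq_prod_def)

lemma swap_mem: "p \<in> prod.swap ` B \<longleftrightarrow> prod.swap p \<in> B"
  by (metis image_iff swap_swap)

lemma kB_sp_swap: "kB_sp B (prod.swap p) = kB_sp (prod.swap ` B) p"
  unfolding kB_sp_def by (simp add: swap_mem)

lemma kB_map_swap: "kB_map B (prod.swap p) (prod.swap q) = kB_map (prod.swap ` B) p q"
  unfolding kB_map_def by (simp add: swap_mem)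

lemma pmono_swap:
  fixes Q :: "('a::order \<times> 'b::order) set"
  shows "pmono sc1 sc2 (prod.swap ` Q) (\<lambda>p. V1 (prod.swap p)) (\<lambda>p q. F1 (prod.swap p) (prod.swap q))
      (\<lambda>p. V2 (prod.swap p)) (\<lambda>p q. F2 (prod.swap p) (prod.swap q)) (\<lambda>p. \<phi> (prod.swap p))
    \<longleftrightarrow> pmono sc1 sc2 Q V1 F1 V2 F2 \<phi>"
  by (simp add: pmono_def pmorphism_def swap_le)

lemma pmodule_swap:
  fixes Q :: "('a::order \<times> 'b::order) set"
  assumes "pmodule sc Q V F"
  shows "pmodule sc (prod.swap ` Q) (\<lambda>p. V (prod.swap p)) (\<lambda>p q. F (prod.swap p) (prod.swap q))"
  using assms by (simp add: pmodule_def swap_le)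

lemma pfd_swap:
  assumes "pfd sc Q V"
  shows "pfd sc (prod.swap ` Q) (\<lambda>p. V (prod.swap p))"
  using assms by (simp add: pfd_def)

lemma mex_swap:
  fixes V :: "('a::linorder \<times> 'b::linorder) \<Rightarrow> 'v::ab_group_add set"
  assumes mex: "middle_exact sc V F"
  shows "middle_exact sc (\<lambda>p. V (prod.swap p)) (\<lambda>p q. F (prod.swap p) (prod.swap q))"
  unfolding middle_exact_def Let_def
proof (intro allI impI ballI)
  fix x x' :: 'b and y y' :: 'a and u w
  assume xx: "x \<le> x'" and yy: "y \<le> y'" and u: "u \<in> V (prod.swap (x, y'))"
    and w: "w \<in> V (prod.swap (x', y))"
    and eq: "F (prod.swap (x, y')) (prod.swap (x', y')) u - F (prod.swap (x', y)) (prod.swap (x', y')) w = 0"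
  have u': "u \<in> V (y', x)" and w': "w \<in> V (y, x')" using u w by auto
  have eq': "F (y, x') (y', x') w - F (y', x) (y', x') u = 0"
    using eq by (simp add: eq_iff_diff_eq_0[symmetric])
  obtain mm where mm: "mm \<in> V (y, x)" "F (y, x) (y, x') mm = w" "F (y, x) (y', x) mm = u"
    using mex[unfolded middle_exact_def Let_def, rule_format, OF yy xx w' u' eq'] by blast
  show "\<exists>m\<in>V (prod.swap (x, y)). F (prod.swap (x, y)) (prod.swap (x, y')) m = u \<and>
          F (prod.swap (x, y)) (prod.swap (x', y)) m = w"
    using mm by auto
qed

theorem lemma5p4:
  fixes sc :: "'k::field \<Rightarrow> 'v::ab_group_add \<Rightarrow> 'v"
    and V :: "('a::linorder \<times> 'b::linorder) \<Rightarrow> 'v set"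
    and F :: "'a \<times> 'b \<Rightarrow> 'a \<times> 'b \<Rightarrow> 'v \<Rightarrow> 'v"
    and s :: 'a and t :: 'b and JS :: "'a set" and JT :: "'b set"
  assumes M: "pmodule sc UNIV V F"
    and pfd: "pfd sc UNIV V"
    and mex: "middle_exact sc V F"
    and JS: "interval JS" and JT: "interval JT"
  shows
   "((\<exists>u. u \<notin> JT \<and> (\<forall>j\<in>JT. j \<le> u)) \<longrightarrow>
      (\<forall>h. pmono (*) sc ({s} \<times> UNIV) (kB_sp ({s} \<times> JT)) (kB_map ({s} \<times> JT)) V F h \<longrightarrow>
        (\<exists>g. pmono (*) sc ({..s} \<times> UNIV) (kB_sp ({..s} \<times> JT)) (kB_map ({..s} \<times> JT)) V F g \<and>
             (\<forall>p\<in>{s} \<times> UNIV. \<forall>x\<in>kB_sp ({s} \<times> JT) p. g p x = h p x))))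
    \<and>
    ((\<exists>u. u \<notin> JS \<and> (\<forall>j\<in>JS. j \<le> u)) \<longrightarrow>
      (\<forall>h. pmono (*) sc (UNIV \<times> {t}) (kB_sp (JS \<times> {t})) (kB_map (JS \<times> {t})) V F h \<longrightarrow>
        (\<exists>g. pmono (*) sc (UNIV \<times> {..t}) (kB_sp (JS \<times> {..t})) (kB_map (JS \<times> {..t})) V F g \<and>
             (\<forall>p\<in>UNIV \<times> {t}. \<forall>x\<in>kB_sp (JS \<times> {t}) p. g p x = h p x))))"

proof (intro conjI impI allI)
  fix h assume u: "\<exists>u. u \<notin> JT \<and> (\<forall>j\<in>JT. j \<le> u)"
    and h: "pmono (*) sc ({s} \<times> UNIV) (kB_sp ({s} \<times> JT)) (kB_map ({s} \<times> JT)) V F h"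
  show "\<exists>g. pmono (*) sc ({..s} \<times> UNIV) (kB_sp ({..s} \<times> JT)) (kB_map ({..s} \<times> JT)) V F g \<and>
             (\<forall>p\<in>{s} \<times> UNIV. \<forall>x\<in>kB_sp ({s} \<times> JT) p. g p x = h p x)"
    by (rule part1[OF M pfd mex JT u h])
next
  fix h assume u: "\<exists>u. u \<notin> JS \<and> (\<forall>j\<in>JS. j \<le> u)"
    and h: "pmono (*) sc (UNIV \<times> {t}) (kB_sp (JS \<times> {t})) (kB_map (JS \<times> {t})) V F h"
  define V' where "V' = (\<lambda>p. V (prod.swap p))"
  define F' where "F' = (\<lambda>p q. F (prod.swap p) (prod.swap q))"
  have sU: "prod.swap ` (UNIV :: ('a \<times> 'b) set) = UNIV" by (simp add: surj_swap)
  have M': "pmodule sc UNIV V' F'" using pmodule_swap[OF M] sU unfolding V'_def F'_def by simp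
  have pfd': "pfd sc UNIV V'" using pfd_swap[OF pfd] sU unfolding V'_def by simp
  have mex': "middle_exact sc V' F'" using mex_swap[OF mex] unfolding V'_def F'_def .
  have i1: "prod.swap ` (UNIV \<times> {t}) = {t} \<times> (UNIV :: 'a set)" by auto
  have i2: "prod.swap ` (JS \<times> {t}) = {t} \<times> JS" by auto
  have i3: "prod.swap ` ({..t} \<times> (UNIV :: 'a set)) = UNIV \<times> {..t}" by auto
  have i4: "prod.swap ` ({..t} \<times> JS) = JS \<times> {..t}" by auto
  have h': "pmono (*) sc ({t} \<times> UNIV) (kB_sp ({t} \<times> JS)) (kB_map ({t} \<times> JS)) V' F' (\<lambda>p. h (prod.swap p))"
    using iffD2[OF pmono_swap h] unfolding V'_def F'_def kB_sp_swap kB_map_swap i1 i2 .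
  obtain g' where g': "pmono (*) sc ({..t} \<times> UNIV) (kB_sp ({..t} \<times> JS)) (kB_map ({..t} \<times> JS)) V' F' g'"
    "\<forall>p\<in>{t} \<times> UNIV. \<forall>x\<in>kB_sp ({t} \<times> JS) p. g' p x = h (prod.swap p) x"
    using part1[OF M' pfd' mex' JS u h'] by blast
  have "pmono (*) sc (prod.swap ` ({..t} \<times> UNIV)) (\<lambda>p. kB_sp ({..t} \<times> JS) (prod.swap p))
      (\<lambda>p q. kB_map ({..t} \<times> JS) (prod.swap p) (prod.swap q)) (\<lambda>p. V' (prod.swap p))
      (\<lambda>p q. F' (prod.swap p) (prod.swap q)) (\<lambda>p. g' (prod.swap p))"
    using iffD2[OF pmono_swap g'(1)] .
  then have g: "pmono (*) sc (UNIV \<times> {..t}) (kB_sp (JS \<times> {..t})) (kB_map (JS \<times> {..t})) V F (\<lambda>p. g' (prod.swap p))"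
    unfolding V'_def F'_def kB_sp_swap kB_map_swap i3 i4 by simp
  moreover have "\<forall>p\<in>UNIV \<times> {t}. \<forall>x\<in>kB_sp (JS \<times> {t}) p. g' (prod.swap p) x = h p x"
  proof (intro ballI)
    fix p and x :: 'k assume p: "p \<in> UNIV \<times> {t}" and x: "x \<in> kB_sp (JS \<times> {t}) p"
    have sp: "prod.swap p \<in> {t} \<times> UNIV" using p by auto
    moreover have sx: "x \<in> kB_sp ({t} \<times> JS) (prod.swap p)" using x unfolding kB_sp_swap[symmetric] i2[symmetric] 
      by (simp add: kB_sp_def swap_mem)
    have "g' (prod.swap p) x = h (prod.swap (prod.swap p)) x" using bspec[OF bspec[OF g'(2) sp] sx] .
    then show "g' (prod.swap p) x = h p x" by simp
  qed
  ultimately show "\<exists>g. pmono (*) sc (UNIV \<times> {..t}) (kB_sp (JS \<times> {..t})) (kB_map (JS \<times> {..t})) V F g \<and>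
             (\<forall>p\<in>UNIV \<times> {t}. \<forall>x\<in>kB_sp (JS \<times> {t}) p. g p x = h p x)" by blast
qed

end
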